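(* Let $1\le d<N$ and draw a random subspace $P$ uniformly with respect to the Haar measure from $G(N-d,N)$, and let $x\in\mathbb{R}^N$ be a randomly chosen vector. Then, with probability $1$, the quantities $$\|Pe_i\|_2^2\ (i\in\{1,\dots,N-1\}),\qquad \|P(e_j+e_k)\|_2^2\ (j\in\{1,\dots,d\},\ k\in\{j+1,\dots,N\}),\qquad \|Px\|_2^2$$ uniquely determine $P$, i.e. $P$ is the only $H\in G(N-d,N)$ for which all of these quantities coincide with the corresponding quantities for $H$.
   Context: $G(m,N)$ denotes the Grassmannian of $m$-dimensional linear subspaces of $\mathbb{R}^N$; for a subspace $H$, $Hy$ denotes the orthogonal projection of $y$ onto $H$. $e_1,\dots,e_N$ are the canonical unit vectors of $\mathbb{R}^N$. The random vector $x$ is understood to be drawn independently of $P$ from a probability distribution absolutely continuous with respect to Lebesgue measure. *)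

theory Defs
  imports "HOL-Analysis.Analysis" "HOL-Probability.Probability"
begin

definition Grass :: "nat \<Rightarrow> (real^'n) set set" where
  "Grass m = {H. subspace H \<and> dim H = m}"

definition oproj :: "(real^'n) set \<Rightarrow> real^'n \<Rightarrow> real^'n" where
  "oproj H y = (THE p. p \<in> H \<and> (\<forall>h\<in>H. (y - p) \<bullet> h = 0))"

text \<open>Matrix of the orthogonal projection onto H; used to topologize the Grassmannian.\<close>
definition projmat :: "(real^'n) set \<Rightarrow> real^'n^'n" where
  "projmat H = (\<chi> i j. oproj H (axis j 1) $ i)"

definition grass_borel :: "nat \<Rightarrow> (real^'n) set measure" where
  "grass_borel m = vimage_algebra (Grass m) projmat borel"

definition haar_grass :: "nat \<Rightarrow> (real^'n) set measure \<Rightarrow> bool" where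
  "haar_grass m M \<longleftrightarrow> prob_space M \<and> sets M = sets (grass_borel m) \<and>
     (\<forall>f. orthogonal_transformation f \<longrightarrow> distr M M (\<lambda>H. f ` H) = M)"

end

theory Submission
  imports Defs "HOL-Computational_Algebra.Polynomial"
begin

lemma oproj_uniq_aux:
  fixes H :: "(real^'n) set"
  assumes "p \<in> H" "\<And>h. h \<in> H \<Longrightarrow> (y - p) \<bullet> h = 0"
    "q \<in> H" "\<And>h. h \<in> H \<Longrightarrow> (y - q) \<bullet> h = 0" "subspace H"
  shows "p = q"
proof -
  have w: "q - p \<in> H" using assms by (simp add: subspace_diff)
  have "(q - p) \<bullet> (q - p) = (y - p) \<bullet> (q - p) - (y - q) \<bullet> (q - p)"
    by (simp add: inner_diff_left)
  also have "\<dots> = 0" using assms(2)[OF w] assms(4)[OF w] by simp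
  finally show ?thesis by simp
qed

lemma oproj_ex1:
  fixes H :: "(real^'n) set"
  assumes "subspace H"
  shows "\<exists>!p. p \<in> H \<and> (\<forall>h\<in>H. (y - p) \<bullet> h = 0)"
proof -
  obtain a z where a: "a \<in> span H" and z: "\<And>w. w \<in> span H \<Longrightarrow> orthogonal z w" and yz: "y = a + z"
    using orthogonal_subspace_decomp_exists[of H y] by blast
  have sH: "span H = H" using assms by (simp add: span_eq_iff)
  have ex: "a \<in> H \<and> (\<forall>h\<in>H. (y - a) \<bullet> h = 0)"
    using a z yz sH by (auto simp: orthogonal_def)
  show ?thesis
  proof (rule ex1I[of _ a])
    show "a \<in> H \<and> (\<forall>h\<in>H. (y - a) \<bullet> h = 0)" by (rule ex)
    fix p assume "p \<in> H \<and> (\<forall>h\<in>H. (y - p) \<bullet> h = 0)"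
    then show "p = a" using oproj_uniq_aux[of p H y a] ex assms by blast
  qed
qed

lemma oproj:
  fixes H :: "(real^'n) set"
  assumes "subspace H"
  shows "oproj H y \<in> H" "\<And>h. h \<in> H \<Longrightarrow> (y - oproj H y) \<bullet> h = 0"
proof -
  have "oproj H y \<in> H \<and> (\<forall>h\<in>H. (y - oproj H y) \<bullet> h = 0)"
    unfolding oproj_def by (rule theI'[OF oproj_ex1[OF assms]])
  then show "oproj H y \<in> H" "\<And>h. h \<in> H \<Longrightarrow> (y - oproj H y) \<bullet> h = 0" by auto
qed

lemma oproj_unique:
  fixes H :: "(real^'n) set"
  assumes "subspace H" "p \<in> H" "\<And>h. h \<in> H \<Longrightarrow> (y - p) \<bullet> h = 0"
  shows "oproj H y = p"
  by (rule oproj_uniq_aux[OF oproj(1)[OF assms(1)] oproj(2)[OF assms(1)] assms(2) assms(3) assms(1)])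

lemma oproj_id:
  fixes H :: "(real^'n) set"
  assumes "subspace H" "v \<in> H"
  shows "oproj H v = v"
  by (rule oproj_unique[OF assms]) simp

lemma oproj_fix_iff:
  fixes H :: "(real^'n) set"
  assumes "subspace H"
  shows "oproj H v = v \<longleftrightarrow> v \<in> H"
  using oproj(1)[OF assms, of v] oproj_id[OF assms] by metis

lemma oproj_linear:
  fixes H :: "(real^'n) set"
  assumes "subspace H"
  shows "linear (oproj H)"
proof (rule linearI)
  fix x y :: "real^'n" and c :: real
  show "oproj H (x + y) = oproj H x + oproj H y"
  proof (rule oproj_unique[OF assms])
    show "oproj H x + oproj H y \<in> H" using oproj(1)[OF assms] assms by (simp add: subspace_add)
    fix h assume "h \<in> H"
    then have "(x - oproj H x) \<bullet> h = 0" "(y - oproj H y) \<bullet> h = 0" using oproj(2)[OF assms] by auto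
    then show "(x + y - (oproj H x + oproj H y)) \<bullet> h = 0"
      by (simp add: inner_diff_left inner_add_left algebra_simps)
  qed
  show "oproj H (c *\<^sub>R x) = c *\<^sub>R oproj H x"
  proof (rule oproj_unique[OF assms])
    show "c *\<^sub>R oproj H x \<in> H" using oproj(1)[OF assms] assms by (simp add: subspace_scale)
    fix h assume "h \<in> H"
    then have "(x - oproj H x) \<bullet> h = 0" using oproj(2)[OF assms] by auto
    then show "(c *\<^sub>R x - c *\<^sub>R oproj H x) \<bullet> h = 0"
      by (simp add: inner_diff_left algebra_simps)
  qed
qed

lemma oproj_inner:
  fixes H :: "(real^'n) set"
  assumes "subspace H"
  shows "oproj H u \<bullet> v = oproj H u \<bullet> oproj H v"
proof -
  have "(v - oproj H v) \<bullet> oproj H u = 0" using oproj[OF assms] by blast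
  then have "v \<bullet> oproj H u = oproj H v \<bullet> oproj H u" by (simp add: inner_diff_left)
  then show ?thesis by (metis inner_commute)
qed

lemma oproj_sym:
  fixes H :: "(real^'n) set"
  assumes "subspace H"
  shows "oproj H u \<bullet> v = oproj H v \<bullet> u"
  using oproj_inner[OF assms, of u v] oproj_inner[OF assms, of v u] by (metis inner_commute)

lemma oproj_norm2:
  fixes H :: "(real^'n) set"
  assumes "subspace H"
  shows "(norm (oproj H y))\<^sup>2 = oproj H y \<bullet> y"
  using oproj_inner[OF assms, of y y] by (simp add: power2_norm_eq_inner)

lemma projmat_mult:
  fixes H :: "(real^'n) set"
  assumes "subspace H"
  shows "projmat H *v v = oproj H v"
proof -
  have "projmat H = matrix (oproj H)" unfolding projmat_def matrix_def by simp
  moreover have "Vector_Spaces.linear (*s) (*s) (oproj H)"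
    using oproj_linear[OF assms] by (simp add: linear_matrix_vector_mul_eq)
  ultimately show ?thesis by (simp add: matrix_works)
qed

lemma oproj_trace:
  fixes H :: "(real^'n) set"
  assumes "subspace H"
  shows "(\<Sum>j\<in>UNIV. oproj H (axis j 1) \<bullet> axis j 1) = real (dim H)"
proof -
  obtain B where B: "B \<subseteq> H" "pairwise orthogonal B" "\<And>x. x \<in> B \<Longrightarrow> norm x = 1"
    "independent B" "card B = dim H" "span B = H"
    using orthonormal_basis_subspace[OF assms] by metis
  have fB: "finite B" using B(4) by (simp add: independent_imp_finite)
  have rep: "oproj H y = (\<Sum>u\<in>B. (y \<bullet> u) *\<^sub>R u)" for y
  proof (rule oproj_unique[OF assms])
    have "\<And>u. u \<in> B \<Longrightarrow> (y \<bullet> u) *\<^sub>R u \<in> span B" by (simp add: span_base span_mul)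
    then have "(\<Sum>u\<in>B. (y \<bullet> u) *\<^sub>R u) \<in> span B" by (rule span_sum)
    then show "(\<Sum>u\<in>B. (y \<bullet> u) *\<^sub>R u) \<in> H" using B(6) by simp
    have orth: "(y - (\<Sum>u\<in>B. (y \<bullet> u) *\<^sub>R u)) \<bullet> w = 0" if "w \<in> B" for w
    proof -
      have "(\<Sum>u\<in>B. (y \<bullet> u) *\<^sub>R u) \<bullet> w = (\<Sum>u\<in>B. (y \<bullet> u) * (u \<bullet> w))"
        by (simp only: inner_sum_left inner_scaleR_left)
      also have "\<dots> = (\<Sum>u\<in>B. if u = w then y \<bullet> w else 0)"
      proof (rule sum.cong)
        fix u assume "u \<in> B"
        show "(y \<bullet> u) * (u \<bullet> w) = (if u = w then y \<bullet> w else 0)"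
        proof (cases "u = w")
          case True
          have "w \<bullet> w = 1" using B(3)[OF that] by (simp add: norm_eq_1)
          then have "u \<bullet> w = 1" using True by simp
          then show ?thesis using True by simp
        next
          case False
          then have "u \<bullet> w = 0" using B(2) \<open>u \<in> B\<close> that by (auto simp: pairwise_def orthogonal_def)
          then show ?thesis using False by simp
        qed
      qed simp
      also have "\<dots> = y \<bullet> w" using fB that by simp
      finally show ?thesis by (simp add: inner_diff_left)
    qed
    have "span B \<subseteq> {h. (y - (\<Sum>u\<in>B. (y \<bullet> u) *\<^sub>R u)) \<bullet> h = 0}"
      by (rule span_minimal) (auto simp: orth subspace_hyperplane)
    then show "(y - (\<Sum>u\<in>B. (y \<bullet> u) *\<^sub>R u)) \<bullet> h = 0" if "h \<in> H" for h
    proof -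
      have "h \<in> span B" using B(6) that by simp
      then show ?thesis using \<open>span B \<subseteq> _\<close> by (simp add: subset_iff)
    qed
  qed
  have ax: "axis j 1 \<bullet> u = u $ j" for j and u :: "real^'n"
    by (metis cart_eq_inner_axis inner_commute)
  have tr: "oproj H (axis j 1) \<bullet> axis j 1 = (\<Sum>u\<in>B. (u $ j) * (u $ j))" for j
  proof -
    have "oproj H (axis j 1) \<bullet> axis j 1 = (\<Sum>u\<in>B. ((axis j 1 \<bullet> u) *\<^sub>R u) \<bullet> axis j 1)"
      unfolding rep by (rule inner_sum_left)
    also have "\<dots> = (\<Sum>u\<in>B. (u $ j) * (u $ j))"
      by (rule sum.cong) (simp_all add: ax inner_axis)
    finally show ?thesis .
  qed
  have "(\<Sum>j\<in>UNIV. oproj H (axis j 1) \<bullet> axis j 1) = (\<Sum>j\<in>UNIV. \<Sum>u\<in>B. (u $ j) * (u $ j))"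
    by (simp only: tr)
  also have "\<dots> = (\<Sum>u\<in>B. \<Sum>j\<in>UNIV. (u $ j) * (u $ j))" by (rule sum.swap)
  also have "\<dots> = (\<Sum>u\<in>B. 1)"
  proof (rule sum.cong)
    fix u assume "u \<in> B"
    have "(\<Sum>j\<in>UNIV. (u $ j) * (u $ j)) = u \<bullet> u" by (simp add: inner_vec_def)
    also have "\<dots> = 1" using B(3)[OF \<open>u \<in> B\<close>] by (simp add: norm_eq_1)
    finally show "(\<Sum>j\<in>UNIV. (u $ j) * (u $ j)) = 1" .
  qed simp
  also have "\<dots> = real (dim H)" using B(5) by simp
  finally show ?thesis .
qed


lemma key_unique:
  fixes P H E :: "(real^'n) set"
  assumes sP: "subspace P" and sH: "subspace H" and sE: "subspace E"
    and dimPH: "dim H = dim P" and dimsum: "dim P + dim E = CARD('n)"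
    and agree: "\<And>v. v \<in> E \<Longrightarrow> oproj P v = oproj H v"
    and trans: "\<And>v. v \<in> E \<Longrightarrow> v \<in> P \<Longrightarrow> v = 0"
  shows "H = P"
proof -
  define f where "f = (\<lambda>v. v - oproj P v)"
  have lP: "linear (oproj P)" by (rule oproj_linear[OF sP])
  have lf: "linear f" unfolding f_def
    by (rule linearI) (simp_all add: linear_add[OF lP] linear_cmul[OF lP] algebra_simps)
  have spE: "span E = E" using sE by (simp add: span_eq_iff)
  have injf: "inj_on f (span E)"
  proof (rule inj_onI)
    fix x y assume xy: "x \<in> span E" "y \<in> span E" "f x = f y"
    have xyE: "x - y \<in> E" using xy spE sE by (simp add: subspace_diff)
    have "f (x - y) = 0" using xy(3) linear_diff[OF lf, of x y] by simp
    then have "oproj P (x - y) = x - y" unfolding f_def by simp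
    then have "x - y \<in> P" using oproj_fix_iff[OF sP] by blast
    then show "x = y" using trans[OF xyE] by simp
  qed
  define W where "W = f ` E"
  have dW: "dim W = dim E" unfolding W_def by (rule dim_image_eq[OF lf injf])
  have sW: "subspace W" unfolding W_def by (rule linear_subspace_image[OF lf sE])
  have WP: "w \<bullet> p = 0" if "w \<in> W" "p \<in> P" for w p
    using that oproj(2)[OF sP] unfolding W_def f_def by auto
  have WH: "w \<bullet> h = 0" if wW: "w \<in> W" and hH: "h \<in> H" for w h
  proof -
    obtain v where v: "v \<in> E" "w = v - oproj P v" using wW unfolding W_def f_def by blast
    then have "w = v - oproj H v" using agree by simp
    then show ?thesis using oproj(2)[OF sH] hH by simp
  qed
  have PW0: "P \<inter> W \<subseteq> {0}"
  proof
    fix w assume "w \<in> P \<inter> W"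
    then have "w \<bullet> w = 0" using WP by blast
    then show "w \<in> {0}" by simp
  qed
  have d0: "dim (P \<inter> W) = 0" using PW0 by (simp add: dim_eq_0)
  define S where "S = {x + y | x y. x \<in> P \<and> y \<in> W}"
  have sS: "subspace S" unfolding S_def by (rule subspace_sums[OF sP sW])
  have dS: "dim S = CARD('n)"
    using dim_sums_Int[OF sP sW] d0 dW dimsum unfolding S_def by simp
  have SU: "S = UNIV"
    by (rule subspace_dim_equal[OF sS subspace_UNIV]) (simp_all add: dS)
  have HP: "H \<subseteq> P"
  proof
    fix x assume xH: "x \<in> H"
    have "x \<in> S" using SU by simp
    then obtain a w where aw: "x = a + w" "a \<in> P" "w \<in> W" unfolding S_def by blast
    have "w \<bullet> w = w \<bullet> x - w \<bullet> a" using aw(1) by (simp add: inner_add_right)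
    also have "\<dots> = 0" using WH[OF aw(3) xH] WP[OF aw(3) aw(2)] by simp
    finally have "w = 0" by simp
    then show "x \<in> P" using aw by simp
  qed
  show "H = P" by (rule subspace_dim_equal[OF sH sP HP]) (simp add: dimPH)
qed

lemma quant_agree:
  fixes \<sigma> :: "nat \<Rightarrow> 'n::finite" and d :: nat and P H :: "(real^'n) set"
  assumes bij: "bij_betw \<sigma> {1..CARD('n)} UNIV" and dN: "d < CARD('n)"
    and sP: "subspace P" and sH: "subspace H"
    and dimP: "dim P = CARD('n) - d" and dimH: "dim H = CARD('n) - d"
    and q1: "\<forall>i \<in> {1..CARD('n) - 1}.
            (norm (oproj H (axis (\<sigma> i) 1)))\<^sup>2 = (norm (oproj P (axis (\<sigma> i) 1)))\<^sup>2"
    and q2: "\<forall>j \<in> {1..d}. \<forall>k \<in> {j+1..CARD('n)}.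
            (norm (oproj H (axis (\<sigma> j) 1 + axis (\<sigma> k) 1)))\<^sup>2
              = (norm (oproj P (axis (\<sigma> j) 1 + axis (\<sigma> k) 1)))\<^sup>2"
    and a: "a \<in> {1..d}"
  shows "oproj P (axis (\<sigma> a) 1) = oproj H (axis (\<sigma> a) 1)"
proof -
  define N where "N = CARD('n)"
  define e where "e c = (axis c 1 :: real^'n)" for c
  define gP where "gP u v = oproj P u \<bullet> v" for u v
  define gH where "gH u v = oproj H u \<bullet> v" for u v
  have sig: "\<sigma> ` {1..N} = UNIV" using bij by (simp add: bij_betw_def N_def)
  have inj: "inj_on \<sigma> {1..N}" using bij by (simp add: bij_betw_def N_def)
  have N1: "1 \<le> N" using dN by (simp add: N_def)
  have diag1: "gP (e (\<sigma> i)) (e (\<sigma> i)) = gH (e (\<sigma> i)) (e (\<sigma> i))" if "i \<in> {1..N-1}" for i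
  proof -
    have "(norm (oproj H (e (\<sigma> i))))\<^sup>2 = (norm (oproj P (e (\<sigma> i))))\<^sup>2"
      using q1 that unfolding e_def N_def by blast
    then show ?thesis by (simp add: gP_def gH_def oproj_norm2[OF sP] oproj_norm2[OF sH])
  qed
  have rest: "UNIV - {\<sigma> N} = \<sigma> ` {1..N-1}"
  proof
    show "UNIV - {\<sigma> N} \<subseteq> \<sigma> ` {1..N-1}"
    proof
      fix c assume c: "c \<in> UNIV - {\<sigma> N}"
      obtain i where i: "i \<in> {1..N}" "c = \<sigma> i" using sig by (metis UNIV_I imageE)
      then have "i \<noteq> N" using c by auto
      then have "i \<in> {1..N-1}" using i by auto
      then show "c \<in> \<sigma> ` {1..N-1}" using i by auto
    qed
    show "\<sigma> ` {1..N-1} \<subseteq> UNIV - {\<sigma> N}"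
    proof
      fix c assume "c \<in> \<sigma> ` {1..N-1}"
      then obtain i where i: "i \<in> {1..N-1}" "c = \<sigma> i" by auto
      have "\<sigma> i \<noteq> \<sigma> N"
      proof
        assume "\<sigma> i = \<sigma> N"
        then have "i = N" using inj_onD[OF inj] i N1 by auto
        then show False using i N1 by auto
      qed
      then show "c \<in> UNIV - {\<sigma> N}" using i by auto
    qed
  qed
  have eqr: "(\<Sum>c\<in>UNIV - {\<sigma> N}. gP (e c) (e c)) = (\<Sum>c\<in>UNIV - {\<sigma> N}. gH (e c) (e c))"
  proof (rule sum.cong)
    fix c assume "c \<in> UNIV - {\<sigma> N}"
    then obtain i where "i \<in> {1..N-1}" "c = \<sigma> i" using rest by auto
    then show "gP (e c) (e c) = gH (e c) (e c)" using diag1 by simp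
  qed simp
  have tP: "(\<Sum>c\<in>UNIV. gP (e c) (e c)) = real (N - d)"
    using oproj_trace[OF sP] dimP unfolding gP_def e_def N_def by simp
  have tH: "(\<Sum>c\<in>UNIV. gH (e c) (e c)) = real (N - d)"
    using oproj_trace[OF sH] dimH unfolding gH_def e_def N_def by simp
  have lastd: "gP (e (\<sigma> N)) (e (\<sigma> N)) = gH (e (\<sigma> N)) (e (\<sigma> N))"
    using tP tH eqr sum.remove[of UNIV "\<sigma> N" "\<lambda>c. gP (e c) (e c)"]
      sum.remove[of UNIV "\<sigma> N" "\<lambda>c. gH (e c) (e c)"] by simp
  have diag: "gP (e c) (e c) = gH (e c) (e c)" for c
  proof (cases "c = \<sigma> N")
    case True then show ?thesis using lastd by simp
  next
    case False
    then obtain i where "i \<in> {1..N-1}" "c = \<sigma> i" using rest by blast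
    then show ?thesis using diag1 by simp
  qed
  have pairP: "gP (e j + e k) (e j + e k) = gP (e j) (e j) + gP (e k) (e k) + 2 * gP (e j) (e k)" for j k
  proof -
    have "oproj P (e k) \<bullet> e j = oproj P (e j) \<bullet> e k" by (rule oproj_sym[OF sP])
    then show ?thesis unfolding gP_def
      by (simp add: linear_add[OF oproj_linear[OF sP]] inner_add_left inner_add_right)
  qed
  have pairH: "gH (e j + e k) (e j + e k) = gH (e j) (e j) + gH (e k) (e k) + 2 * gH (e j) (e k)" for j k
  proof -
    have "oproj H (e k) \<bullet> e j = oproj H (e j) \<bullet> e k" by (rule oproj_sym[OF sH])
    then show ?thesis unfolding gH_def
      by (simp add: linear_add[OF oproj_linear[OF sH]] inner_add_left inner_add_right)
  qed
  have off: "gP (e (\<sigma> j)) (e (\<sigma> k)) = gH (e (\<sigma> j)) (e (\<sigma> k))"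
    if "j \<in> {1..d}" "k \<in> {j+1..N}" for j k
  proof -
    have "gP (e (\<sigma> j) + e (\<sigma> k)) (e (\<sigma> j) + e (\<sigma> k)) = gH (e (\<sigma> j) + e (\<sigma> k)) (e (\<sigma> j) + e (\<sigma> k))"
    proof -
      have "(norm (oproj H (e (\<sigma> j) + e (\<sigma> k))))\<^sup>2 = (norm (oproj P (e (\<sigma> j) + e (\<sigma> k))))\<^sup>2"
        using q2 that unfolding e_def N_def by blast
      then show ?thesis by (simp add: gP_def gH_def oproj_norm2[OF sP] oproj_norm2[OF sH])
    qed
    then show ?thesis using pairP pairH diag by simp
  qed
  have comp: "gP (e (\<sigma> a)) (e c) = gH (e (\<sigma> a)) (e c)" for c
  proof -
    obtain b where b: "b \<in> {1..N}" "c = \<sigma> b" using sig by (metis UNIV_I imageE)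
    consider "a < b" | "a = b" | "b < a" by linarith
    then show ?thesis
    proof cases
      case 1 then show ?thesis using off[of a b] a b by auto
    next
      case 2 then show ?thesis using diag b by simp
    next
      case 3
      then have "gP (e (\<sigma> b)) (e (\<sigma> a)) = gH (e (\<sigma> b)) (e (\<sigma> a))"
        using off[of b a] a b dN by (auto simp: N_def)
      moreover have "gP (e (\<sigma> b)) (e (\<sigma> a)) = gP (e (\<sigma> a)) (e (\<sigma> b))"
        unfolding gP_def by (rule oproj_sym[OF sP])
      moreover have "gH (e (\<sigma> b)) (e (\<sigma> a)) = gH (e (\<sigma> a)) (e (\<sigma> b))"
        unfolding gH_def by (rule oproj_sym[OF sH])
      ultimately show ?thesis using b by simp
    qed
  qed
  show ?thesis
    unfolding vec_eq_iff
  proof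
    fix c
    show "oproj P (axis (\<sigma> a) 1) $ c = oproj H (axis (\<sigma> a) 1) $ c"
      using comp[of c] unfolding gP_def gH_def e_def by (simp add: cart_eq_inner_axis)
  qed
qed

lemma orth_map_subspace:
  fixes S T :: "(real^'n) set"
  assumes sS: "subspace S" and sT: "subspace T" and d: "dim S = dim T"
  obtains g where "orthogonal_transformation g" "g ` S = T"
proof -
  have cS: "{y \<in> UNIV. \<forall>x\<in>S. orthogonal x y} = orthogonal_comp S"
    by (auto simp: orthogonal_comp_def)
  have cT: "{y \<in> UNIV. \<forall>x\<in>T. orthogonal x y} = orthogonal_comp T"
    by (auto simp: orthogonal_comp_def)
  have "dim (orthogonal_comp S) + dim S = dim (UNIV :: (real^'n) set)"
    using dim_subspace_orthogonal_to_vectors[OF sS subspace_UNIV subset_UNIV] cS by simp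
  moreover have "dim (orthogonal_comp T) + dim T = dim (UNIV :: (real^'n) set)"
    using dim_subspace_orthogonal_to_vectors[OF sT subspace_UNIV subset_UNIV] cT by simp
  ultimately have d': "dim (orthogonal_comp S) = dim (orthogonal_comp T)" using d by simp
  obtain f1 g1 where f1: "linear f1" "f1 ` S = T" "\<And>x. x \<in> S \<Longrightarrow> norm (f1 x) = norm x"
    using isometries_subspaces[OF sS sT d] by metis
  obtain f2 g2 where f2: "linear f2" "f2 ` orthogonal_comp S = orthogonal_comp T"
      "\<And>x. x \<in> orthogonal_comp S \<Longrightarrow> norm (f2 x) = norm x"
    using isometries_subspaces[OF subspace_orthogonal_comp subspace_orthogonal_comp d'] by metis
  define g where "g x = f1 (oproj S x) + f2 (x - oproj S x)" for x
  have lS: "linear (oproj S)" by (rule oproj_linear[OF sS])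
  have lg: "linear g"
    unfolding g_def
    by (rule linearI) (simp_all add: linear_add[OF lS] linear_cmul[OF lS] linear_add[OF f1(1)]
        linear_cmul[OF f1(1)] linear_add[OF f2(1)] linear_cmul[OF f2(1)] linear_diff[OF f2(1)] algebra_simps)
  have ng: "norm (g x) = norm x" for x
  proof -
    define a where "a = oproj S x"
    define b where "b = x - oproj S x"
    have aS: "a \<in> S" unfolding a_def by (rule oproj(1)[OF sS])
    have bS: "b \<in> orthogonal_comp S"
      unfolding b_def orthogonal_comp_def orthogonal_def
      using oproj(2)[OF sS] by (simp add: inner_commute)
    have f1T: "f1 a \<in> T" using aS f1(2) by blast
    have f2T: "f2 b \<in> orthogonal_comp T" using bS f2(2) by blast
    have o1: "orthogonal (f1 a) (f2 b)" using f1T f2T by (simp add: orthogonal_comp_def)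
    have o2: "orthogonal a b" using aS bS by (simp add: orthogonal_comp_def)
    have gx: "g x = f1 a + f2 b" by (simp add: g_def a_def b_def)
    have "(norm (g x))\<^sup>2 = (norm (f1 a))\<^sup>2 + (norm (f2 b))\<^sup>2"
      unfolding gx by (rule norm_add_Pythagorean[OF o1])
    also have "\<dots> = (norm a)\<^sup>2 + (norm b)\<^sup>2" using f1(3)[OF aS] f2(3)[OF bS] by simp
    also have "\<dots> = (norm (a + b))\<^sup>2" by (rule norm_add_Pythagorean[OF o2, symmetric])
    also have "a + b = x" unfolding a_def b_def by simp
    finally show ?thesis by (rule power2_eq_imp_eq) simp_all
  qed
  have ot: "orthogonal_transformation g" using lg ng by (simp add: orthogonal_transformation)
  have gS: "g x = f1 x" if "x \<in> S" for x
    using that oproj_id[OF sS that] linear_0[OF f2(1)] unfolding g_def by simp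
  have "g ` S = f1 ` S" using gS by (auto simp: image_iff)
  then show ?thesis using that ot f1(2) by simp
qed

lemma digits_bound:
  fixes a :: "nat \<Rightarrow> nat" and W :: nat
  assumes "\<forall>k<n. a k < W"
  shows "(\<Sum>k<n. a k * W^k) < W^n"
  using assms
proof (induction n)
  case 0 then show ?case by simp
next
  case (Suc n)
  have IH: "(\<Sum>k<n. a k * W^k) < W^n" using Suc by simp
  have "a n < W" using Suc.prems by simp
  then have an: "a n + 1 \<le> W" by simp
  have "(\<Sum>k<Suc n. a k * W^k) = (\<Sum>k<n. a k * W^k) + a n * W^n" by simp
  also have "\<dots> < W^n + a n * W^n" using IH by simp
  also have "\<dots> = (a n + 1) * W^n" by simp
  also have "\<dots> \<le> W * W^n" using an by (rule mult_right_mono) simp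
  also have "\<dots> = W ^ Suc n" by simp
  finally show ?case .
qed

lemma digits_inj:
  fixes a b :: "nat \<Rightarrow> nat" and W :: nat
  assumes "\<forall>k<n. a k < W" "\<forall>k<n. b k < W" "(\<Sum>k<n. a k * W^k) = (\<Sum>k<n. b k * W^k)"
  shows "\<forall>k<n. a k = b k"
  using assms
proof (induction n)
  case 0 then show ?case by simp
next
  case (Suc n)
  define sa where "sa = (\<Sum>k<n. a k * W^k)"
  define sb where "sb = (\<Sum>k<n. b k * W^k)"
  have ba: "sa < W^n" unfolding sa_def using Suc.prems(1) by (intro digits_bound) simp
  have bb: "sb < W^n" unfolding sb_def using Suc.prems(2) by (intro digits_bound) simp
  have pos: "W^n > 0" by (rule le_less_trans[OF _ ba]) simp
  have eq: "sa + a n * W^n = sb + b n * W^n" using Suc.prems(3) by (simp add: sa_def sb_def)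
  have "(sa + a n * W^n) div W^n = a n" using ba pos by simp
  moreover have "(sb + b n * W^n) div W^n = b n" using bb pos by simp
  ultimately have abn: "a n = b n" using eq by simp
  then have "sa = sb" using eq by simp
  then have e2: "(\<Sum>k<n. a k * W^k) = (\<Sum>k<n. b k * W^k)" by (simp add: sa_def sb_def)
  have p1: "\<forall>k<n. a k < W" using Suc.prems(1) by simp
  have p2: "\<forall>k<n. b k < W" using Suc.prems(2) by simp
  have "\<forall>k<n. a k = b k" by (rule Suc.IH[OF p1 p2 e2])
  then show ?case using abn by (auto simp: less_Suc_eq)
qed

lemma row_lambda: "row i (\<chi> k. r k) = r i"
  by (simp add: row_def vec_eq_iff)

lemma det_zero_if_dep:
  fixes A :: "real^'n^'n"
  assumes "(\<Sum>i\<in>UNIV. c i *s row i A) = 0" "c i \<noteq> 0"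
  shows "det A = 0"
proof (rule ccontr)
  assume "det A \<noteq> 0"
  then have "invertible A" by (simp add: invertible_det_nz)
  then have "\<exists>B. A ** B = mat 1" by (simp add: invertible_right_inverse)
  then have H: "\<forall>c. (\<Sum>i\<in>UNIV. c i *s row i A) = 0 \<longrightarrow> (\<forall>i. c i = 0)"
    by (simp only: matrix_right_invertible_independent_rows)
  show False using H assms by blast
qed

lemma span_image_sum:
  fixes f :: "'a \<Rightarrow> 'b::real_vector"
  assumes fT: "finite T" and x: "x \<in> span (f ` T)"
  shows "\<exists>a. x = (\<Sum>i\<in>T. a i *\<^sub>R f i)"
proof -
  have "span (f ` T) \<subseteq> {x. \<exists>a. x = (\<Sum>i\<in>T. a i *\<^sub>R f i)}"
  proof (rule span_minimal)
    show "f ` T \<subseteq> {x. \<exists>a. x = (\<Sum>i\<in>T. a i *\<^sub>R f i)}"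
    proof
      fix y assume "y \<in> f ` T"
      then obtain i where i: "i \<in> T" "y = f i" by auto
      have "(\<Sum>k\<in>T. (if k = i then 1 else 0) *\<^sub>R f k) = (\<Sum>k\<in>T. if k = i then f k else 0)"
        by (rule sum.cong) auto
      also have "\<dots> = f i" using i fT by simp
      finally have "y = (\<Sum>k\<in>T. (if k = i then 1 else 0) *\<^sub>R f k)" using i by simp
      then show "y \<in> {x. \<exists>a. x = (\<Sum>i\<in>T. a i *\<^sub>R f i)}"
        unfolding mem_Collect_eq by (rule exI[of _ "\<lambda>k. if k = i then 1 else (0::real)"])
    qed
    show "subspace {x. \<exists>a. x = (\<Sum>i\<in>T. a i *\<^sub>R f i)}"
      unfolding subspace_def
    proof (intro conjI ballI allI)
      show "0 \<in> {x. \<exists>a. x = (\<Sum>i\<in>T. a i *\<^sub>R f i)}"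
        by (auto intro!: exI[of _ "\<lambda>_. 0"])
      fix x y assume "x \<in> {x. \<exists>a. x = (\<Sum>i\<in>T. a i *\<^sub>R f i)}" "y \<in> {x. \<exists>a. x = (\<Sum>i\<in>T. a i *\<^sub>R f i)}"
      then obtain a b where ab: "x = (\<Sum>i\<in>T. a i *\<^sub>R f i)" "y = (\<Sum>i\<in>T. b i *\<^sub>R f i)" by auto
      have "x + y = (\<Sum>i\<in>T. (a i + b i) *\<^sub>R f i)"
        using ab by (simp add: scaleR_add_left sum.distrib)
      then show "x + y \<in> {x. \<exists>a. x = (\<Sum>i\<in>T. a i *\<^sub>R f i)}"
        unfolding mem_Collect_eq by (rule exI[of _ "\<lambda>i. a i + b i"])
    next
      fix c :: real and x assume "x \<in> {x. \<exists>a. x = (\<Sum>i\<in>T. a i *\<^sub>R f i)}"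
      then obtain a where a: "x = (\<Sum>i\<in>T. a i *\<^sub>R f i)" by auto
      have "c *\<^sub>R x = (\<Sum>i\<in>T. (c * a i) *\<^sub>R f i)"
        using a by (simp add: scaleR_sum_right)
      then show "c *\<^sub>R x \<in> {x. \<exists>a. x = (\<Sum>i\<in>T. a i *\<^sub>R f i)}"
        unfolding mem_Collect_eq by (rule exI[of _ "\<lambda>i. c * a i"])
    qed
  qed
  then show ?thesis using x by blast
qed

lemma family_indep:
  fixes f :: "'a \<Rightarrow> 'b::real_vector"
  assumes fT: "finite T"
    and ind: "\<And>a. (\<Sum>i\<in>T. a i *\<^sub>R f i) = 0 \<Longrightarrow> \<forall>i\<in>T. a i = 0"
  shows "inj_on f T" "independent (f ` T)"
proof -
  have delta: "(\<Sum>k\<in>T. (if k = i then 1 else 0) *\<^sub>R f k) = f i" if "i \<in> T" for i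
  proof -
    have "(\<Sum>k\<in>T. (if k = i then 1 else 0) *\<^sub>R f k) = (\<Sum>k\<in>T. if k = i then f k else 0)"
      by (rule sum.cong) auto
    also have "\<dots> = f i" using that fT by simp
    finally show ?thesis .
  qed
  show inj: "inj_on f T"
  proof (rule inj_onI)
    fix i j assume ij: "i \<in> T" "j \<in> T" "f i = f j"
    show "i = j"
    proof (rule ccontr)
      assume ne: "i \<noteq> j"
      define a where "a k = (if k = i then 1 else 0) - (if k = j then (1::real) else 0)" for k
      have "(\<Sum>k\<in>T. a k *\<^sub>R f k) = (\<Sum>k\<in>T. (if k = i then 1 else 0) *\<^sub>R f k) - (\<Sum>k\<in>T. (if k = j then 1 else 0) *\<^sub>R f k)"
        unfolding a_def by (simp add: scaleR_diff_left sum_subtractf)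
      also have "\<dots> = 0" using delta[OF ij(1)] delta[OF ij(2)] ij(3) by simp
      finally have "\<forall>k\<in>T. a k = 0" by (rule ind)
      then have "a i = 0" using ij by blast
      then show False using ne by (simp add: a_def)
    qed
  qed
  show "independent (f ` T)"
  proof
    assume "dependent (f ` T)"
    then obtain u where u: "\<exists>v\<in>f ` T. u v \<noteq> 0" "(\<Sum>v\<in>f ` T. u v *\<^sub>R v) = 0"
      using dependent_finite[of "f ` T"] fT by auto
    have "(\<Sum>i\<in>T. u (f i) *\<^sub>R f i) = 0" using u(2) sum.reindex[OF inj, of "\<lambda>v. u v *\<^sub>R v"] by simp
    then have "\<forall>i\<in>T. u (f i) = 0" by (rule ind)
    then show False using u(1) by auto
  qed
qed

definition brow :: "(nat \<Rightarrow> 'n::finite) \<Rightarrow> nat \<Rightarrow> real \<Rightarrow> 'n \<Rightarrow> real^'n" where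
  "brow \<sigma> m t i = (\<chi> j. t ^ (inv_into {1..CARD('n)} \<sigma> j * (CARD('n) + 1) ^ (inv_into {1..CARD('n)} \<sigma> i - m - 1)))"

lemma finite_bad_t:
  fixes \<sigma> :: "nat \<Rightarrow> 'n::finite" and P :: "(real^'n) set" and m :: nat
  assumes bij: "bij_betw \<sigma> {1..CARD('n)} UNIV" and mN: "m \<le> CARD('n)"
    and sP: "subspace P" and dP: "dim P = m"
  shows "finite {t::nat. (\<exists>v. v \<noteq> 0 \<and> v \<in> P \<and> v \<in> span (brow \<sigma> m (real t) ` (\<sigma> ` {m+1..CARD('n)})))
           \<or> dim (span (brow \<sigma> m (real t) ` (\<sigma> ` {m+1..CARD('n)}))) \<noteq> CARD('n) - m}"
proof -
  define N where "N = CARD('n)"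
  define T where "T = \<sigma> ` {m+1..N}"
  define \<nu> where "\<nu> = inv_into {1..N} \<sigma>"
  define ex where "ex i j = \<nu> j * (N+1) ^ (\<nu> i - m - 1)" for i j
  have inj: "inj_on \<sigma> {1..N}" using bij by (simp add: bij_betw_def N_def)
  have sig: "\<sigma> ` {1..N} = UNIV" using bij by (simp add: bij_betw_def N_def)
  have \<nu>\<sigma>: "\<nu> (\<sigma> k) = k" if "k \<in> {1..N}" for k unfolding \<nu>_def using inv_into_f_f[OF inj that] .
  have \<sigma>\<nu>: "\<sigma> (\<nu> j) = j" for j unfolding \<nu>_def using f_inv_into_f[of j \<sigma> "{1..N}"] sig by simp
  have \<nu>r: "\<nu> j \<in> {1..N}" for j unfolding \<nu>_def using inv_into_into[of j \<sigma> "{1..N}"] sig by simp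
  have Tchar: "a \<in> T \<longleftrightarrow> m+1 \<le> \<nu> a \<and> \<nu> a \<le> N" for a
  proof
    assume "a \<in> T"
    then obtain x where x: "x \<in> {m+1..N}" "a = \<sigma> x" unfolding T_def by auto
    then have "x \<in> {1..N}" by auto
    then have "\<nu> a = x" using x \<nu>\<sigma> by simp
    then show "m+1 \<le> \<nu> a \<and> \<nu> a \<le> N" using x by auto
  next
    assume "m+1 \<le> \<nu> a \<and> \<nu> a \<le> N"
    then have "\<nu> a \<in> {m+1..N}" by auto
    then show "a \<in> T" unfolding T_def using \<sigma>\<nu>[of a] by (metis imageI)
  qed
  have browe: "brow \<sigma> m t i = (\<chi> j. t ^ ex i j)" for t i
    unfolding brow_def ex_def \<nu>_def N_def by simp
  have fT: "finite T" by simp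
  have cT: "card T = N - m"
  proof -
    have "inj_on \<sigma> {m+1..N}" by (rule inj_on_subset[OF inj]) auto
    then have "card T = card {m+1..N}" unfolding T_def by (rule card_image)
    then show ?thesis by simp
  qed
  have cC: "card (UNIV - T) = m"
  proof -
    have "card (UNIV - T) = card (UNIV :: 'n set) - card T" by (rule card_Diff_subset) simp_all
    then show ?thesis using cT mN by (simp add: N_def)
  qed
  obtain BP where BP: "BP \<subseteq> P" "independent BP" "P \<subseteq> span BP" "card BP = dim P"
    using basis_exists[of P] by blast
  have fBP: "finite BP" using BP(2) by (simp add: independent_imp_finite)
  obtain pb0 where pb0: "bij_betw pb0 (UNIV - T) BP"
    using finite_same_card_bij[of "UNIV - T" BP] fBP cC BP(4) dP by auto
  define A where "A t = (\<chi> i. if i \<in> T then brow \<sigma> m t i else pb0 i)" for t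
  have rowA: "row i (A t) = (if i \<in> T then brow \<sigma> m t i else pb0 i)" for i t
    unfolding A_def by (rule row_lambda)
  have splitsum: "(\<Sum>i\<in>UNIV. g i) = (\<Sum>i\<in>T. g i) + (\<Sum>i\<in>UNIV - T. g i)" for g :: "'n \<Rightarrow> real^'n"
    using sum.subset_diff[of T UNIV g] by (simp add: add.commute)
  have claim1: "det (A t) = 0" if v: "v \<noteq> 0" "v \<in> P" "v \<in> span (brow \<sigma> m t ` T)" for t v
  proof -
    obtain a where a: "v = (\<Sum>i\<in>T. a i *\<^sub>R brow \<sigma> m t i)" using span_image_sum[OF fT v(3)] by blast
    have "v \<in> span BP" using v(2) BP(3) by blast
    then obtain u where u: "v = (\<Sum>w\<in>BP. u w *\<^sub>R w)" using span_finite[OF fBP] by auto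
    have u2: "v = (\<Sum>i\<in>UNIV - T. u (pb0 i) *\<^sub>R pb0 i)"
      using u sum.reindex_bij_betw[OF pb0, of "\<lambda>w. u w *\<^sub>R w"] by simp
    define c where "c i = (if i \<in> T then a i else - u (pb0 i))" for i
    have "(\<Sum>i\<in>UNIV. c i *s row i (A t)) = (\<Sum>i\<in>T. c i *s row i (A t)) + (\<Sum>i\<in>UNIV - T. c i *s row i (A t))"
      by (rule splitsum)
    also have "(\<Sum>i\<in>T. c i *s row i (A t)) = (\<Sum>i\<in>T. a i *\<^sub>R brow \<sigma> m t i)"
      by (rule sum.cong) (simp_all add: c_def rowA scalar_mult_eq_scaleR)
    also have "(\<Sum>i\<in>UNIV - T. c i *s row i (A t)) = (\<Sum>i\<in>UNIV - T. (- u (pb0 i)) *\<^sub>R pb0 i)"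
      by (rule sum.cong) (simp_all add: c_def rowA scalar_mult_eq_scaleR)
    also have "\<dots> = - v" using u2 by (simp add: sum_negf)
    finally have z: "(\<Sum>i\<in>UNIV. c i *s row i (A t)) = 0" using a by simp
    have "\<exists>i\<in>T. a i \<noteq> 0"
    proof (rule ccontr)
      assume "\<not> (\<exists>i\<in>T. a i \<noteq> 0)"
      then have "v = 0" using a by simp
      then show False using v(1) by simp
    qed
    then obtain i where "i \<in> T" "a i \<noteq> 0" by blast
    then have "c i \<noteq> 0" by (simp add: c_def)
    then show ?thesis by (rule det_zero_if_dep[OF z])
  qed
  have claim2: "dim (span (brow \<sigma> m t ` T)) = N - m" if nz: "det (A t) \<noteq> 0" for t
  proof -
    have ind: "\<forall>i\<in>T. a i = 0" if z: "(\<Sum>i\<in>T. a i *\<^sub>R brow \<sigma> m t i) = 0" for a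
    proof
      fix i assume iT: "i \<in> T"
      define c where "c k = (if k \<in> T then a k else 0)" for k
      have "(\<Sum>k\<in>UNIV. c k *s row k (A t)) = (\<Sum>k\<in>UNIV. if k \<in> T then a k *\<^sub>R brow \<sigma> m t k else 0)"
        by (rule sum.cong) (simp_all add: c_def rowA scalar_mult_eq_scaleR)
      also have "\<dots> = (\<Sum>k\<in>UNIV \<inter> T. a k *\<^sub>R brow \<sigma> m t k)"
        using sum.inter_restrict[of "UNIV::'n set" "\<lambda>k. a k *\<^sub>R brow \<sigma> m t k" T] by simp
      also have "\<dots> = 0" using z by simp
      finally have zz: "(\<Sum>k\<in>UNIV. c k *s row k (A t)) = 0" .
      have "c i = 0"
      proof (rule ccontr)
        assume "c i \<noteq> 0"
        then have "det (A t) = 0" by (rule det_zero_if_dep[OF zz])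
        then show False using nz by simp
      qed
      then show "a i = 0" using iT by (simp add: c_def)
    qed
    have ij: "inj_on (brow \<sigma> m t) T" "independent (brow \<sigma> m t ` T)"
      using family_indep[OF fT ind] by auto
    have "card (brow \<sigma> m t ` T) = dim (span (brow \<sigma> m t ` T))"
      using indep_card_eq_dim_span[OF ij(2)] by simp
    moreover have "card (brow \<sigma> m t ` T) = card T" by (rule card_image[OF ij(1)])
    ultimately show ?thesis using cT by simp
  qed
  define F where "F = {f. (\<forall>i\<in>T. f i \<in> (UNIV::'n set)) \<and> (\<forall>i. i \<notin> T \<longrightarrow> f i = i)}"
  define Ex where "Ex f = (\<Sum>i\<in>T. ex i (f i))" for f
  define D where "D f = det (\<chi> i. if i \<in> T then axis (f i) (1::real) else pb0 i)" for f
  have expand: "det (A t) = (\<Sum>f\<in>F. D f * t ^ Ex f)" for t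
  proof -
    have bexp: "brow \<sigma> m t i = (\<Sum>j\<in>UNIV. (t ^ ex i j) *s axis j 1)" for i
    proof -
      have "(\<Sum>j\<in>UNIV. (t ^ ex i j) *s axis j 1) = (\<Sum>j\<in>UNIV. (brow \<sigma> m t i $ j) *s axis j 1)"
        by (simp add: browe)
      also have "\<dots> = brow \<sigma> m t i" by (rule basis_expansion)
      finally show ?thesis by simp
    qed
    have "A t = (\<chi> i. if i \<in> T then sum (\<lambda>j. (t ^ ex i j) *s axis j 1) UNIV else pb0 i)"
      unfolding A_def bexp by (rule refl)
    then have "det (A t) = (\<Sum>f\<in>F. det (\<chi> i. if i \<in> T then (t ^ ex i (f i)) *s axis (f i) 1 else pb0 i))"
      unfolding F_def
      using det_linear_rows_sum_lemma[of "UNIV::'n set" T "\<lambda>i j. (t ^ ex i j) *s axis j 1" pb0] by simp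
    also have "\<dots> = (\<Sum>f\<in>F. D f * t ^ Ex f)"
    proof (rule sum.cong)
      fix f assume "f \<in> F"
      have "(\<chi> i. if i \<in> T then (t ^ ex i (f i)) *s axis (f i) 1 else pb0 i)
          = (\<chi> i. (if i \<in> T then t ^ ex i (f i) else 1) *s (if i \<in> T then axis (f i) 1 else pb0 i))"
        by (rule Cart_lambda_cong) simp
      then have "det (\<chi> i. if i \<in> T then (t ^ ex i (f i)) *s axis (f i) 1 else pb0 i)
          = (\<Prod>i\<in>UNIV. if i \<in> T then t ^ ex i (f i) else 1) * D f"
        unfolding D_def by (simp add: det_rows_mul)
      also have "(\<Prod>i\<in>UNIV. if i \<in> T then t ^ ex i (f i) else 1) = (\<Prod>i\<in>UNIV \<inter> T. t ^ ex i (f i))"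
        using prod.inter_restrict[of "UNIV::'n set" "\<lambda>i. t ^ ex i (f i)" T] by simp
      also have "\<dots> = t ^ Ex f" by (simp add: Ex_def power_sum)
      finally show "det (\<chi> i. if i \<in> T then (t ^ ex i (f i)) *s axis (f i) 1 else pb0 i) = D f * t ^ Ex f"
        by (simp add: mult.commute)
    qed simp
    finally show ?thesis .
  qed
  have finF: "finite F" by (rule finite_subset[of _ UNIV]) simp_all
  have Exk: "Ex f = (\<Sum>k<N-m. \<nu> (f (\<sigma> (m+1+k))) * (N+1)^k)" for f
    unfolding Ex_def ex_def
  proof (rule sum.reindex_bij_witness[where i="\<lambda>k. \<sigma> (m+1+k)" and j="\<lambda>i. \<nu> i - m - 1"])
    fix a assume a: "a \<in> T"
    then have a1: "m+1 \<le> \<nu> a" "\<nu> a \<le> N" using Tchar by auto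
    then have e: "m + 1 + (\<nu> a - m - 1) = \<nu> a" by simp
    show "\<sigma> (m + 1 + (\<nu> a - m - 1)) = a" using e \<sigma>\<nu> by simp
    show "\<nu> a - m - 1 \<in> {..<N - m}" using a1 by auto
    show "\<nu> (f (\<sigma> (m + 1 + (\<nu> a - m - 1)))) * (N + 1) ^ (\<nu> a - m - 1) = \<nu> (f a) * (N + 1) ^ (\<nu> a - m - 1)"
      using e \<sigma>\<nu> by simp
  next
    fix b assume b: "b \<in> {..<N-m}"
    then have b1: "m+1+b \<in> {1..N}" by auto
    show "\<nu> (\<sigma> (m + 1 + b)) - m - 1 = b" using \<nu>\<sigma>[OF b1] by simp
    show "\<sigma> (m+1+b) \<in> T" using b1 b unfolding T_def by auto
  qed
  have Exinj: "f = g" if fg: "f \<in> F" "g \<in> F" "Ex f = Ex g" for f g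
  proof -
    have dig: "\<forall>k<N-m. \<nu> (f (\<sigma> (m+1+k))) = \<nu> (g (\<sigma> (m+1+k)))"
    proof (rule digits_inj[of "N-m" _ "N+1"])
      show "\<forall>k<N - m. \<nu> (f (\<sigma> (m + 1 + k))) < N + 1" using \<nu>r by (simp add: less_Suc_eq_le)
      show "\<forall>k<N - m. \<nu> (g (\<sigma> (m + 1 + k))) < N + 1" using \<nu>r by (simp add: less_Suc_eq_le)
      show "(\<Sum>k<N - m. \<nu> (f (\<sigma> (m + 1 + k))) * (N + 1) ^ k) = (\<Sum>k<N - m. \<nu> (g (\<sigma> (m + 1 + k))) * (N + 1) ^ k)"
        using fg(3) Exk by simp
    qed
    show "f = g"
    proof (rule ext)
      fix i show "f i = g i"
      proof (cases "i \<in> T")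
        case True
        then have a1: "m+1 \<le> \<nu> i" "\<nu> i \<le> N" using Tchar by auto
        then have e: "m + 1 + (\<nu> i - m - 1) = \<nu> i" by simp
        have "\<nu> i - m - 1 < N - m" using a1 by simp
        then have "\<nu> (f (\<sigma> (m+1+(\<nu> i - m - 1)))) = \<nu> (g (\<sigma> (m+1+(\<nu> i - m - 1))))" using dig by blast
        then have "\<nu> (f i) = \<nu> (g i)" using e \<sigma>\<nu> by simp
        then have "\<sigma> (\<nu> (f i)) = \<sigma> (\<nu> (g i))" by simp
        then show ?thesis using \<sigma>\<nu> by simp
      next
        case False
        then show ?thesis using fg(1,2) unfolding F_def by simp
      qed
    qed
  qed
  have f0ex: "\<exists>f0\<in>F. D f0 \<noteq> 0"
  proof -
    obtain B where B: "BP \<subseteq> B" "B \<subseteq> BP \<union> Basis" "independent B" "BP \<union> Basis \<subseteq> span B"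
      using maximal_independent_subset_extend[of BP "BP \<union> Basis"] BP(2) by blast
    have fB: "finite B" using B(3) by (simp add: independent_imp_finite)
    have "Basis \<subseteq> span B" using B(4) by blast
    then have "span Basis \<subseteq> span B" by (rule span_minimal[OF _ subspace_span])
    then have spB: "span B = UNIV" using span_Basis by auto
    have cB: "card B = N"
      using indep_card_eq_dim_span[OF B(3)] spB by (simp add: dim_UNIV DIM_cart N_def)
    define C where "C = B - BP"
    have cC': "card C = N - m"
      unfolding C_def using card_Diff_subset[OF finite_subset[OF B(1) fB] B(1)] cB BP(4) dP by simp
    have CB: "C \<subseteq> Basis" using B(2) unfolding C_def by blast
    define J where "J = {j. axis j (1::real) \<in> C}"
    have axJ: "(\<lambda>j. axis j (1::real)) ` J = C"
    proof
      show "(\<lambda>j. axis j 1) ` J \<subseteq> C" unfolding J_def by auto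
      show "C \<subseteq> (\<lambda>j. axis j 1) ` J"
      proof
        fix v assume vC: "v \<in> C"
        then have "v = axis (axis_index v) 1" using CB axis_index by blast
        then show "v \<in> (\<lambda>j. axis j 1) ` J" using vC unfolding J_def by (metis (mono_tags, lifting) imageI mem_Collect_eq)
      qed
    qed
    have injax: "inj (\<lambda>j::'n. axis j (1::real))" by (auto simp: inj_on_def axis_eq_axis)
    have cJ: "card J = N - m"
      using card_image[OF inj_on_subset[OF injax subset_UNIV, of J]] axJ cC' by simp
    obtain gT where gT: "bij_betw gT T J" using finite_same_card_bij[of T J] cT cJ by auto
    define f0 where "f0 i = (if i \<in> T then gT i else i)" for i
    have f0F: "f0 \<in> F" unfolding F_def f0_def by auto
    define r where "r i = (if i \<in> T then axis (f0 i) (1::real) else pb0 i)" for i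
    have Dr: "D f0 = det (\<chi> i. r i)" unfolding D_def r_def by simp
    have rT: "r ` T = C"
    proof -
      have "r ` T = (\<lambda>j. axis j (1::real)) ` (gT ` T)" by (auto simp: r_def f0_def image_iff)
      also have "gT ` T = J" using gT by (simp add: bij_betw_def)
      finally show ?thesis using axJ by simp
    qed
    have rN: "r ` (UNIV - T) = BP"
    proof -
      have "r ` (UNIV - T) = pb0 ` (UNIV - T)" by (auto simp: r_def image_iff)
      then show ?thesis using pb0 by (simp add: bij_betw_def)
    qed
    have rimg: "r ` UNIV = B"
    proof -
      have "r ` UNIV = r ` T \<union> r ` (UNIV - T)" by auto
      also have "\<dots> = C \<union> BP" using rT rN by simp
      also have "\<dots> = B" using B(1) unfolding C_def by auto
      finally show ?thesis .
    qed
    have rinj: "inj r"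
    proof (rule injI)
      fix i j assume rij: "r i = r j"
      show "i = j"
      proof (cases "i \<in> T"; cases "j \<in> T")
        assume iT: "i \<in> T" and jT: "j \<in> T"
        then have "axis (gT i) (1::real) = axis (gT j) 1" using rij by (simp add: r_def f0_def)
        then have "gT i = gT j" by (simp add: axis_eq_axis)
        then show "i = j" using gT iT jT by (auto simp: bij_betw_def inj_on_def)
      next
        assume iT: "i \<notin> T" and jT: "j \<notin> T"
        then have "pb0 i = pb0 j" using rij by (simp add: r_def)
        then show "i = j" using pb0 iT jT by (auto simp: bij_betw_def inj_on_def)
      next
        assume iT: "i \<in> T" and jT: "j \<notin> T"
        have "r i \<in> C" using rT iT by blast
        moreover have "r j \<in> BP" using rN jT by blast
        ultimately show "i = j" using rij unfolding C_def by simp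
      next
        assume iT: "i \<notin> T" and jT: "j \<in> T"
        have "r j \<in> C" using rT jT by blast
        moreover have "r i \<in> BP" using rN iT by blast
        ultimately show "i = j" using rij unfolding C_def by simp
      qed
    qed
    have bijr: "bij_betw r UNIV B" using rinj rimg by (simp add: bij_betw_def)
    have "D f0 \<noteq> 0"
    proof
      assume "D f0 = 0"
      then have "\<not> invertible (\<chi> i. r i)" using Dr invertible_det_nz[of "\<chi> i. r i"] by simp
      then have "\<not> (\<exists>B'. (\<chi> i. r i) ** B' = mat 1)" by (simp add: invertible_right_inverse)
      then have "\<not> (\<forall>c. (\<Sum>i\<in>UNIV. c i *s row i (\<chi> i. r i)) = 0 \<longrightarrow> (\<forall>i. c i = 0))"
        using matrix_right_invertible_independent_rows[of "\<chi> i. r i"] by blast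
      then obtain c i where c: "(\<Sum>i\<in>UNIV. c i *s row i (\<chi> i. r i)) = 0" "c i \<noteq> 0" by blast
      have c2: "(\<Sum>i\<in>UNIV. c i *\<^sub>R r i) = 0" using c(1) by (simp add: row_lambda scalar_mult_eq_scaleR)
      define u where "u v = c (inv r v)" for v
      have "(\<Sum>v\<in>B. u v *\<^sub>R v) = (\<Sum>i\<in>UNIV. u (r i) *\<^sub>R r i)"
        using sum.reindex_bij_betw[OF bijr, of "\<lambda>v. u v *\<^sub>R v"] by simp
      also have "\<dots> = (\<Sum>i\<in>UNIV. c i *\<^sub>R r i)" using rinj by (simp add: u_def)
      finally have s0: "(\<Sum>v\<in>B. u v *\<^sub>R v) = 0" using c2 by simp
      have "u (r i) \<noteq> 0" using c(2) rinj by (simp add: u_def)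
      moreover have "r i \<in> B" using rimg by blast
      ultimately have "dependent B" using dependent_finite[OF fB] s0 by blast
      then show False using B(3) by simp
    qed
    then show ?thesis using f0F by blast
  qed
  define q where "q = (\<Sum>f\<in>F. monom (D f) (Ex f))"
  have polyq: "poly q t = det (A t)" for t unfolding q_def by (simp add: poly_sum poly_monom expand)
  obtain f0 where f0: "f0 \<in> F" "D f0 \<noteq> 0" using f0ex by blast
  have "coeff q (Ex f0) = (\<Sum>f\<in>F. if f = f0 then D f else 0)"
    unfolding q_def coeff_sum
  proof (rule sum.cong)
    fix f assume fF: "f \<in> F"
    show "coeff (monom (D f) (Ex f)) (Ex f0) = (if f = f0 then D f else 0)"
      using Exinj[OF fF f0(1)] by (auto simp: coeff_monom)
  qed simp
  also have "\<dots> = D f0" using f0(1) finF by simp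
  finally have "q \<noteq> 0" using f0(2) by auto
  then have finroots: "finite {x. poly q x = 0}" by (rule poly_roots_finite)
  have eqset: "{t::nat. det (A (real t)) = 0} = real -` {x. poly q x = 0}" by (auto simp: polyq)
  have finA: "finite {t::nat. det (A (real t)) = 0}"
    unfolding eqset by (rule finite_vimageI[OF finroots inj_of_nat])
  have sub: "{t::nat. (\<exists>v. v \<noteq> 0 \<and> v \<in> P \<and> v \<in> span (brow \<sigma> m (real t) ` T))
           \<or> dim (span (brow \<sigma> m (real t) ` T)) \<noteq> N - m} \<subseteq> {t::nat. det (A (real t)) = 0}"
    using claim1 claim2 by blast
  show ?thesis using finite_subset[OF sub finA] unfolding T_def N_def by simp
qed

lemma distr_inv:
  assumes "distr M M f = M" "emeasure M (space M) \<noteq> 0" "A \<in> sets M"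
  shows "emeasure M A = emeasure M (f -` A \<inter> space M)"
proof -
  define \<mu>' where "\<mu>' B = emeasure M (f -` B \<inter> space M)" for B
  have e: "emeasure M X = (if X \<in> sigma_sets (space M) (sets M) \<and>
      measure_space (space M) (sigma_sets (space M) (sets M)) \<mu>' then \<mu>' X else 0)" for X
  proof -
    have "emeasure M X = emeasure (distr M M f) X" using assms(1) by simp
    also have "\<dots> = (if X \<in> sigma_sets (space M) (sets M) \<and>
      measure_space (space M) (sigma_sets (space M) (sets M)) \<mu>' then \<mu>' X else 0)"
      unfolding distr_def emeasure_measure_of_conv \<mu>'_def by simp
    finally show ?thesis .
  qed
  have "space M \<in> sigma_sets (space M) (sets M)" by (rule sigma_sets.Basic) simp
  then have ms: "measure_space (space M) (sigma_sets (space M) (sets M)) \<mu>'"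
    using e[of "space M"] assms(2) by (auto split: if_splits)
  have "A \<in> sigma_sets (space M) (sets M)" by (rule sigma_sets.Basic[OF assms(3)])
  then show ?thesis using e[of A] ms unfolding \<mu>'_def by simp
qed

lemma dim_E0:
  fixes \<sigma> :: "nat \<Rightarrow> 'n::finite"
  assumes bij: "bij_betw \<sigma> {1..CARD('n)} UNIV" and dN: "d \<le> CARD('n)"
  shows "dim (span ((\<lambda>k. axis (\<sigma> k) (1::real)) ` {1..d})) = d"
proof -
  let ?S = "(\<lambda>k. axis (\<sigma> k) (1::real)) ` {1..d}"
  have "?S \<subseteq> Basis" by (auto simp: Basis_vec_def)
  then have ind: "independent ?S" by (rule independent_mono[OF independent_Basis])
  have inj: "inj_on \<sigma> {1..d}"
    by (rule inj_on_subset[OF bij_betw_imp_inj_on[OF bij]]) (use dN in auto)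
  have injax: "inj_on (\<lambda>j::'n. axis j (1::real)) (\<sigma> ` {1..d})"
    by (rule inj_onI) (simp add: axis_eq_axis)
  have "inj_on ((\<lambda>j::'n. axis j (1::real)) \<circ> \<sigma>) {1..d}" by (rule comp_inj_on[OF inj injax])
  then have "inj_on (\<lambda>k. axis (\<sigma> k) (1::real)) {1..d}" by (simp add: o_def)
  then have "card ?S = d" by (simp add: card_image)
  then show ?thesis using dim_eq_card_independent[OF ind] by simp
qed

lemma lin_agree_span:
  fixes f g :: "'a::real_vector \<Rightarrow> 'b::real_vector"
  assumes lf: "linear f" and lg: "linear g" and eq: "\<And>x. x \<in> S \<Longrightarrow> f x = g x" and x: "x \<in> span S"
  shows "f x = g x"
proof -
  have lh: "linear (\<lambda>x. f x - g x)"
    by (rule linearI) (simp_all add: linear_add[OF lf] linear_add[OF lg] linear_cmul[OF lf] linear_cmul[OF lg] algebra_simps)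
  have "span S \<subseteq> {x. f x - g x = 0}"
    by (rule span_minimal) (use eq linear_subspace_kernel[OF lh] in auto)
  then show ?thesis using x by auto
qed

lemma closed_fixset:
  fixes S :: "(real^'n) set"
  assumes "compact S"
  shows "closed {A::real^'n^'n. \<exists>v. v \<in> S \<and> A *v v = v}"
proof -
  have eq: "(\<lambda>p::(real^'n) \<times> (real^'n^'n). snd p *v fst p) = (\<lambda>p. \<chi> i. \<Sum>j\<in>UNIV. snd p $ i $ j * fst p $ j)"
    by (simp add: matrix_vector_mult_def fun_eq_iff)
  have c: "continuous_on UNIV (\<lambda>p::(real^'n) \<times> (real^'n^'n). snd p *v fst p)"
    unfolding eq
    by (intro continuous_on_vec_lambda continuous_on_sum continuous_on_mult continuous_on_component
        continuous_on_fst continuous_on_snd continuous_on_id)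
  have "closed {p::(real^'n) \<times> (real^'n^'n). snd p *v fst p = fst p}"
    by (rule closed_Collect_eq[OF c continuous_on_fst[OF continuous_on_id]])
  then have "closed {A. \<exists>v. v \<in> S \<and> (v, A) \<in> {p::(real^'n) \<times> (real^'n^'n). snd p *v fst p = fst p}}"
    by (rule closed_compact_projection[OF assms])
  then show ?thesis by simp
qed

theorem corollary4p6:
  fixes d :: nat and \<sigma> :: "nat \<Rightarrow> 'n::finite"
    and M :: "(real^'n) set measure" and \<mu> :: "(real^'n) measure"
  assumes "1 \<le> d" and "d < CARD('n)"
    and "bij_betw \<sigma> {1..CARD('n)} UNIV"
    and "haar_grass (CARD('n) - d) M"
    and "prob_space \<mu>" and "sets \<mu> = sets borel" and "absolutely_continuous lborel \<mu>"
  shows "AE (P, x) in M \<Otimes>\<^sub>M \<mu>.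
     (\<forall>H \<in> Grass (CARD('n) - d).
        ((\<forall>i \<in> {1..CARD('n) - 1}.
            (norm (oproj H (axis (\<sigma> i) 1)))\<^sup>2 = (norm (oproj P (axis (\<sigma> i) 1)))\<^sup>2)
         \<and> (\<forall>j \<in> {1..d}. \<forall>k \<in> {j+1..CARD('n)}.
            (norm (oproj H (axis (\<sigma> j) 1 + axis (\<sigma> k) 1)))\<^sup>2
              = (norm (oproj P (axis (\<sigma> j) 1 + axis (\<sigma> k) 1)))\<^sup>2)
         \<and> (norm (oproj H x))\<^sup>2 = (norm (oproj P x))\<^sup>2)
        \<longrightarrow> H = P)"
proof -
  note dN = assms(2) and bij = assms(3)
  define N where "N = CARD('n)"
  define m where "m = N - d"
  define G where "G = (Grass m :: (real^'n) set set)"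
  define E0 where "E0 = (span ((\<lambda>k. axis (\<sigma> k) (1::real)) ` {1..d}) :: (real^'n) set)"
  define Z where "Z = {H \<in> G. \<exists>v. v \<noteq> 0 \<and> v \<in> H \<and> v \<in> E0}"
  have mN: "m \<le> N" "N - m = d" "m + d = N" using dN by (auto simp: m_def N_def)
  have pM: "prob_space M" and sM: "sets M = sets (grass_borel m)"
    and inv: "\<And>f. orthogonal_transformation f \<Longrightarrow> distr M M (\<lambda>H. f ` H) = M"
    using assms(4) unfolding haar_grass_def m_def N_def by auto
  have spM: "space M = G"
    using sets_eq_imp_space_eq[OF sM] unfolding grass_borel_def G_def by simp
  have sE0: "subspace E0" unfolding E0_def by (rule subspace_span)
  have dE0: "dim E0 = d" unfolding E0_def using dim_E0[OF bij] dN by simp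
  have Gchar: "H \<in> G \<longleftrightarrow> subspace H \<and> dim H = m" for H unfolding G_def Grass_def by simp
  have uniq: "H = P" if PG: "P \<in> G" and PZ: "P \<notin> Z" and HG: "H \<in> G"
    and q1: "\<forall>i \<in> {1..CARD('n) - 1}.
            (norm (oproj H (axis (\<sigma> i) 1)))\<^sup>2 = (norm (oproj P (axis (\<sigma> i) 1)))\<^sup>2"
    and q2: "\<forall>j \<in> {1..d}. \<forall>k \<in> {j+1..CARD('n)}.
            (norm (oproj H (axis (\<sigma> j) 1 + axis (\<sigma> k) 1)))\<^sup>2
              = (norm (oproj P (axis (\<sigma> j) 1 + axis (\<sigma> k) 1)))\<^sup>2" for P H
  proof -
    have sP: "subspace P" and dP: "dim P = CARD('n) - d" using PG Gchar by (auto simp: m_def N_def)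
    have sH: "subspace H" and dH: "dim H = CARD('n) - d" using HG Gchar by (auto simp: m_def N_def)
    have agreeB: "oproj P x = oproj H x" if xS: "x \<in> (\<lambda>k. axis (\<sigma> k) (1::real)) ` {1..d}" for x
    proof -
      obtain a where a: "a \<in> {1..d}" "x = axis (\<sigma> a) 1" using xS by auto
      show ?thesis using quant_agree[OF bij dN sP sH dP dH q1 q2 a(1)] a(2) by simp
    qed
    have agreeE: "oproj P v = oproj H v" if vE: "v \<in> E0" for v
      using lin_agree_span[where x = v, OF oproj_linear[OF sP] oproj_linear[OF sH] agreeB] vE unfolding E0_def by simp
    have trans: "v = 0" if "v \<in> E0" "v \<in> P" for v
      using PZ PG that unfolding Z_def by blast
    have dimsum: "dim P + dim E0 = CARD('n)" using dP dE0 dN by simp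
    show "H = P" by (rule key_unique[OF sP sH sE0 _ dimsum agreeE trans]) (simp add: dP dH)
  qed
  have Zs: "Z \<in> sets M"
  proof -
    define Cl where "Cl = {A::real^'n^'n. \<exists>v. v \<in> E0 \<inter> sphere 0 1 \<and> A *v v = v}"
    have "compact (E0 \<inter> sphere 0 1)"
      unfolding E0_def by (rule closed_Int_compact[OF closed_span compact_sphere])
    then have "closed Cl" unfolding Cl_def by (rule closed_fixset)
    then have Clb: "Cl \<in> sets borel" by (rule borel_closed)
    have Zeq: "Z = projmat -` Cl \<inter> G"
    proof (intro set_eqI iffI)
      fix H assume HZ: "H \<in> Z"
      then have HG: "H \<in> G" and sH: "subspace H" using Gchar unfolding Z_def by auto
      obtain v where v: "v \<noteq> 0" "v \<in> H" "v \<in> E0" using HZ unfolding Z_def by blast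
      define w where "w = (1 / norm v) *\<^sub>R v"
      have wE: "w \<in> E0" unfolding w_def using v(3) sE0 by (simp add: subspace_scale)
      have wH: "w \<in> H" unfolding w_def using v(2) sH by (simp add: subspace_scale)
      have wn: "norm w = 1" unfolding w_def using v(1) by simp
      have "projmat H *v w = w" using projmat_mult[OF sH] oproj_fix_iff[OF sH] wH by simp
      then have "projmat H \<in> Cl" unfolding Cl_def using wE wn by auto
      then show "H \<in> projmat -` Cl \<inter> G" using HG by simp
    next
      fix H assume H: "H \<in> projmat -` Cl \<inter> G"
      then have HG: "H \<in> G" and sH: "subspace H" using Gchar by auto
      obtain v where v: "v \<in> E0" "norm v = 1" "projmat H *v v = v" using H unfolding Cl_def by auto
      have "v \<in> H" using v(3) projmat_mult[OF sH] oproj_fix_iff[OF sH] by simp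
      moreover have "v \<noteq> 0" using v(2) by auto
      ultimately show "H \<in> Z" unfolding Z_def using HG v(1) by blast
    qed
    have "Z \<in> sets (vimage_algebra G projmat borel)" unfolding Zeq by (rule in_vimage_algebra[OF Clb])
    then show ?thesis using sM unfolding grass_borel_def G_def by simp
  qed
  have Z0: "emeasure M Z = 0"
  proof (rule ccontr)
    assume Zne: "emeasure M Z \<noteq> 0"
    interpret pM: prob_space M by (rule pM)
    define Et where "Et t = span (brow \<sigma> m (real t) ` (\<sigma> ` {m+1..CARD('n)}))" for t :: nat
    define Zt where "Zt t = {H \<in> G. \<exists>v. v \<noteq> 0 \<and> v \<in> H \<and> v \<in> Et t}" for t
    define Good where "Good = {t::nat. dim (Et t) = d}"
    have eqZt: "emeasure M (Zt t) = emeasure M Z" if tG: "t \<in> Good" for t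
    proof -
      have "dim (Et t) = dim E0" using tG dE0 unfolding Good_def by simp
      then obtain g where g: "orthogonal_transformation g" "g ` Et t = E0"
        using orth_map_subspace[OF _ sE0] unfolding Et_def by (metis subspace_span)
      have lg: "linear g" using g(1) by (rule orthogonal_transformation_linear)
      have ig: "inj g" using g(1) by (rule orthogonal_transformation_inj)
      have ne: "emeasure M (space M) \<noteq> 0" using pM.emeasure_space_1 by simp
      have "emeasure M Z = emeasure M ((\<lambda>H. g ` H) -` Z \<inter> space M)"
        by (rule distr_inv[OF inv[OF g(1)] ne Zs])
      also have "(\<lambda>H. g ` H) -` Z \<inter> space M = Zt t"
      proof (intro set_eqI iffI)
        fix H assume "H \<in> (\<lambda>H. g ` H) -` Z \<inter> space M"
        then have HG: "H \<in> G" and gHZ: "g ` H \<in> Z" using spM by auto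
        obtain v where v: "v \<noteq> 0" "v \<in> g ` H" "v \<in> E0" using gHZ unfolding Z_def by blast
        obtain w where w: "w \<in> H" "v = g w" using v(2) by blast
        have "g w \<in> g ` Et t" using v(3) w(2) g(2) by simp
        then have wE: "w \<in> Et t" using ig by (auto simp: inj_eq)
        have "w \<noteq> 0" using v(1) w(2) linear_0[OF lg] by auto
        then show "H \<in> Zt t" unfolding Zt_def using HG w(1) wE by blast
      next
        fix H assume HZt: "H \<in> Zt t"
        then have HG: "H \<in> G" unfolding Zt_def by simp
        then have sH: "subspace H" and dH: "dim H = m" using Gchar by auto
        obtain w where w: "w \<noteq> 0" "w \<in> H" "w \<in> Et t" using HZt unfolding Zt_def by blast
        have sgH: "subspace (g ` H)" by (rule linear_subspace_image[OF lg sH])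
        have "dim (g ` H) = dim H" by (rule dim_image_eq[OF lg inj_on_subset[OF ig subset_UNIV]])
        then have gHG: "g ` H \<in> G" using sgH dH Gchar by simp
        have "g w \<noteq> 0" using w(1) ig linear_0[OF lg] by (metis injD)
        moreover have "g w \<in> E0" using w(3) g(2) by blast
        moreover have "g w \<in> g ` H" using w(2) by blast
        ultimately have "g ` H \<in> Z" unfolding Z_def using gHG by blast
        then show "H \<in> (\<lambda>H. g ` H) -` Z \<inter> space M" using HG spM by simp
      qed
      finally show ?thesis by simp
    qed
    have Ztsets: "Zt t \<in> sets M" if "t \<in> Good" for t
    proof (rule ccontr)
      assume "Zt t \<notin> sets M"
      then have "emeasure M (Zt t) = 0" by (rule emeasure_notin_sets)
      then show False using eqZt[OF that] Zne by simp
    qed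
    have "Z \<noteq> {}" using Zne by auto
    then obtain H0 where H0: "H0 \<in> Z" by blast
    then have sH0: "subspace H0" and dH0: "dim H0 = m" using Gchar unfolding Z_def by auto
    have finbad: "finite {t::nat. (\<exists>v. v \<noteq> 0 \<and> v \<in> P \<and> v \<in> Et t) \<or> dim (Et t) \<noteq> d}"
      if "subspace P" "dim P = m" for P
      using finite_bad_t[OF bij _ that] mN unfolding Et_def N_def by simp
    have "UNIV - {t::nat. (\<exists>v. v \<noteq> 0 \<and> v \<in> H0 \<and> v \<in> Et t) \<or> dim (Et t) \<noteq> d} \<subseteq> Good"
      unfolding Good_def by auto
    moreover have "infinite (UNIV - {t::nat. (\<exists>v. v \<noteq> 0 \<and> v \<in> H0 \<and> v \<in> Et t) \<or> dim (Et t) \<noteq> d})"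
      using finbad[OF sH0 dH0] by (simp add: Diff_infinite_finite)
    ultimately have infG: "infinite Good" using finite_subset by blast
    define Aseq where "Aseq n = (\<Union>t\<in>{t\<in>Good. n \<le> t}. Zt t)" for n
    have Asets: "Aseq n \<in> sets M" for n
      unfolding Aseq_def
      by (rule sets.countable_UN') (auto intro: Ztsets countable_subset[of _ UNIV])
    have dec: "decseq Aseq" unfolding decseq_def Aseq_def by auto
    define c where "c = measure M Z"
    have ec: "emeasure M Z = ennreal c" unfolding c_def by (rule pM.emeasure_eq_measure)
    have cpos: "c > 0" using Zne ec measure_nonneg[of M Z] unfolding c_def by (auto simp: less_le)
    have lb: "c \<le> measure M (Aseq n)" for n
    proof -
      obtain t where t: "t \<ge> n" "t \<in> Good" using infG unfolding infinite_nat_iff_unbounded_le by blast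
      have "measure M (Zt t) = c" unfolding c_def measure_def using eqZt[OF t(2)] by simp
      moreover have "Zt t \<subseteq> Aseq n" unfolding Aseq_def using t by blast
      ultimately show ?thesis using pM.finite_measure_mono[of "Zt t" "Aseq n"] Asets by simp
    qed
    have lim: "(\<lambda>n. measure M (Aseq n)) \<longlonglongrightarrow> measure M (\<Inter>n. Aseq n)"
      by (rule pM.finite_Lim_measure_decseq) (use Asets dec in auto)
    have "c \<le> measure M (\<Inter>n. Aseq n)" by (rule LIMSEQ_le_const[OF lim]) (use lb in auto)
    then have "(\<Inter>n. Aseq n) \<noteq> {}" using cpos by auto
    then obtain H where H: "\<And>n. H \<in> Aseq n" by blast
    have HG: "H \<in> G" using H[of 0] unfolding Aseq_def Zt_def by auto
    then have sH: "subspace H" and dH: "dim H = m" using Gchar by auto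
    have "infinite {t. t \<in> Good \<and> H \<in> Zt t}"
      unfolding infinite_nat_iff_unbounded_le
    proof
      fix n
      show "\<exists>t\<ge>n. t \<in> {t. t \<in> Good \<and> H \<in> Zt t}" using H[of n] unfolding Aseq_def by blast
    qed
    moreover have "{t. t \<in> Good \<and> H \<in> Zt t} \<subseteq> {t::nat. (\<exists>v. v \<noteq> 0 \<and> v \<in> H \<and> v \<in> Et t) \<or> dim (Et t) \<noteq> d}"
      unfolding Zt_def by blast
    ultimately show False using finbad[OF sH dH] finite_subset by blast
  qed
  have null: "Z \<times> space \<mu> \<in> null_sets (M \<Otimes>\<^sub>M \<mu>)"
  proof -
    have s: "Z \<times> space \<mu> \<in> sets (M \<Otimes>\<^sub>M \<mu>)" by (rule pair_measureI[OF Zs sets.top])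
    have "emeasure (M \<Otimes>\<^sub>M \<mu>) (Z \<times> space \<mu>) = emeasure M Z * emeasure \<mu> (space \<mu>)"
      by (rule sigma_finite_measure.emeasure_pair_measure_Times[OF prob_space_imp_sigma_finite[OF assms(5)] Zs sets.top])
    then have e0: "emeasure (M \<Otimes>\<^sub>M \<mu>) (Z \<times> space \<mu>) = 0" using Z0 by simp
    show ?thesis by (rule null_setsI[OF e0 s])
  qed
  show ?thesis
  proof (rule AE_I'[OF null])
    show "{p \<in> space (M \<Otimes>\<^sub>M \<mu>). \<not> (case p of (P, x) \<Rightarrow>
     (\<forall>H \<in> Grass (CARD('n) - d).
        ((\<forall>i \<in> {1..CARD('n) - 1}.
            (norm (oproj H (axis (\<sigma> i) 1)))\<^sup>2 = (norm (oproj P (axis (\<sigma> i) 1)))\<^sup>2)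
         \<and> (\<forall>j \<in> {1..d}. \<forall>k \<in> {j+1..CARD('n)}.
            (norm (oproj H (axis (\<sigma> j) 1 + axis (\<sigma> k) 1)))\<^sup>2
              = (norm (oproj P (axis (\<sigma> j) 1 + axis (\<sigma> k) 1)))\<^sup>2)
         \<and> (norm (oproj H x))\<^sup>2 = (norm (oproj P x))\<^sup>2)
        \<longrightarrow> H = P))} \<subseteq> Z \<times> space \<mu>"
    proof (rule subsetI)
      fix p assume p: "p \<in> {p \<in> space (M \<Otimes>\<^sub>M \<mu>). \<not> (case p of (P, x) \<Rightarrow>
     (\<forall>H \<in> Grass (CARD('n) - d).
        ((\<forall>i \<in> {1..CARD('n) - 1}.
            (norm (oproj H (axis (\<sigma> i) 1)))\<^sup>2 = (norm (oproj P (axis (\<sigma> i) 1)))\<^sup>2)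
         \<and> (\<forall>j \<in> {1..d}. \<forall>k \<in> {j+1..CARD('n)}.
            (norm (oproj H (axis (\<sigma> j) 1 + axis (\<sigma> k) 1)))\<^sup>2
              = (norm (oproj P (axis (\<sigma> j) 1 + axis (\<sigma> k) 1)))\<^sup>2)
         \<and> (norm (oproj H x))\<^sup>2 = (norm (oproj P x))\<^sup>2)
        \<longrightarrow> H = P))}"
      obtain P x where px: "p = (P, x)" by (cases p)
      have PG: "P \<in> G" and xs: "x \<in> space \<mu>" using p px spM by (auto simp: space_pair_measure)
      have "P \<in> Z"
      proof (rule ccontr)
        assume PZ: "P \<notin> Z"
        have GG: "Grass (CARD('n) - d) = G" unfolding G_def m_def N_def by simp
        have "\<forall>H \<in> Grass (CARD('n) - d).
        ((\<forall>i \<in> {1..CARD('n) - 1}.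
            (norm (oproj H (axis (\<sigma> i) 1)))\<^sup>2 = (norm (oproj P (axis (\<sigma> i) 1)))\<^sup>2)
         \<and> (\<forall>j \<in> {1..d}. \<forall>k \<in> {j+1..CARD('n)}.
            (norm (oproj H (axis (\<sigma> j) 1 + axis (\<sigma> k) 1)))\<^sup>2
              = (norm (oproj P (axis (\<sigma> j) 1 + axis (\<sigma> k) 1)))\<^sup>2)
         \<and> (norm (oproj H x))\<^sup>2 = (norm (oproj P x))\<^sup>2)
        \<longrightarrow> H = P"
          unfolding GG using uniq[OF PG PZ] by blast
        then show False using p px by simp
      qed
      then show "p \<in> Z \<times> space \<mu>" using px xs by simp
    qed
  qed
qed

end
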